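(* Let $\mathcal C\subseteq 2^{[n]}$ be a $k$-inductively pierced code. Then $\mathcal C$ has a well-formed realization by open balls in $\mathbb R^{k+1}$ with the property that every interval of rank at most $k$ contained in $\mathcal C$ is pierceable at some point.
   Context: A code is a set $\mathcal C\subseteq 2^{[n]}$, $[n]=\{1,\dots,n\}$. Standing conventions: $\emptyset\in\mathcal C$; every neuron lies in some codeword; no two distinct neurons lie in exactly the same codewords. $\mathcal C\setminus i$ is obtained by removing $i$ from every codeword. For $\alpha\subseteq\beta$, $[\alpha,\beta]=\{\gamma:\alpha\subseteq\gamma\subseteq\beta\}$, of rank $|\beta\setminus\alpha|$. A neuron $i$ is a $k$-piercing of $\mathcal C$ if there are $\sigma\subseteq\tau\subseteq[n]\setminus\{i\}$ with $[\sigma,\tau]$ of rank $k$, $[\sigma,\tau]\subseteq\mathcal C\setminus i$, and $\mathcal C=(\mathcal C\setminus i)\cup[\sigma\cup\{i\},\tau\cup\{i\}]$. A code is $k$-inductively pierced if $\mathcal C=\{\emptyset\}$, or some neuron $i$ is a $k'$-piercing for some $k'\le k$ and $\mathcal C\setminus i$ is $k$-inductively pierced. For sets $U_1,\dots,U_n\subseteq\mathbb R^d$, the atom of $\gamma$ is $\bigcap_{i\in\gamma}U_i\setminus\bigcup_{j\notin\gamma}U_j$; the collection realizes $\mathcal C$ if $\mathcal C$ is exactly the set of $\gamma$ with nonempty atom. In a realization of $\mathcal C$, an interval $[\alpha,\beta]\subseteq\mathcal C$ is pierceable at $p$ if $p$ is a limit point of the atom of every codeword in $[\alpha,\beta]$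 and of no other atom. A collection of $(d-1)$-spheres in $\mathbb R^d$ is well-formed if for every $m\le d$ the intersection of any $m$ of them is empty or a $(d-m)$-dimensional sphere, and the intersection of any $d+1$ of them is empty; open balls are well-formed if their boundary spheres are. *)

theory Defs
  imports "HOL-Analysis.Analysis"
begin

text \<open>Codes are sets of finite sets of neurons (neurons are natural numbers 1..n).\<close>

definition code_interval :: "nat set \<Rightarrow> nat set \<Rightarrow> nat set set" where
  "code_interval \<alpha> \<beta> = {\<gamma>. \<alpha> \<subseteq> \<gamma> \<and> \<gamma> \<subseteq> \<beta>}"

definition code_del :: "nat set set \<Rightarrow> nat \<Rightarrow> nat set set" where
  "code_del C i = (\<lambda>c. c - {i}) ` C"

definition is_piercing :: "nat set set \<Rightarrow> nat \<Rightarrow> nat \<Rightarrow> bool" where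
  "is_piercing C i k \<longleftrightarrow>
     (\<exists>\<sigma> \<tau>. \<sigma> \<subseteq> \<tau> \<and> finite \<tau> \<and> i \<notin> \<tau> \<and> card (\<tau> - \<sigma>) = k \<and>
        code_interval \<sigma> \<tau> \<subseteq> code_del C i \<and>
        C = code_del C i \<union> code_interval (insert i \<sigma>) (insert i \<tau>))"

inductive k_inductively_pierced :: "nat \<Rightarrow> nat set set \<Rightarrow> bool" for k where
  base: "k_inductively_pierced k {{}}"
| step: "is_piercing C i k' \<Longrightarrow> k' \<le> k \<Longrightarrow> k_inductively_pierced k (code_del C i)
          \<Longrightarrow> k_inductively_pierced k C"

definition atom :: "(nat \<Rightarrow> 'a set) \<Rightarrow> nat \<Rightarrow> nat set \<Rightarrow> 'a set" where
  "atom U n \<gamma> = (\<Inter>i\<in>\<gamma>. U i) - (\<Union>j\<in>{1..n} - \<gamma>. U j)"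

definition realizes :: "(nat \<Rightarrow> 'a set) \<Rightarrow> nat \<Rightarrow> nat set set \<Rightarrow> bool" where
  "realizes U n C \<longleftrightarrow> C = {\<gamma>. \<gamma> \<subseteq> {1..n} \<and> atom U n \<gamma> \<noteq> {}}"

definition is_dim_sphere :: "nat \<Rightarrow> 'a::euclidean_space set \<Rightarrow> bool" where
  "is_dim_sphere j X \<longleftrightarrow>
     (\<exists>c r A. 0 < r \<and> affine A \<and> c \<in> A \<and> aff_dim A = int j + 1 \<and> X = sphere c r \<inter> A)"

definition well_formed_balls :: "nat \<Rightarrow> (nat \<Rightarrow> 'a::euclidean_space) \<Rightarrow> (nat \<Rightarrow> real) \<Rightarrow> bool" where
  "well_formed_balls n c r \<longleftrightarrow>
     (\<forall>S \<subseteq> {1..n}.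
        (1 \<le> card S \<and> card S \<le> DIM('a) \<longrightarrow>
           (\<Inter>i\<in>S. sphere (c i) (r i)) = {} \<or>
           is_dim_sphere (DIM('a) - card S) (\<Inter>i\<in>S. sphere (c i) (r i))) \<and>
        (card S = DIM('a) + 1 \<longrightarrow> (\<Inter>i\<in>S. sphere (c i) (r i)) = {}))"

definition pierceable_at :: "(nat \<Rightarrow> 'a::topological_space set) \<Rightarrow> nat \<Rightarrow> nat set \<Rightarrow> nat set \<Rightarrow> 'a \<Rightarrow> bool" where
  "pierceable_at U n \<alpha> \<beta> p \<longleftrightarrow>
     (\<forall>\<gamma>. \<gamma> \<subseteq> {1..n} \<longrightarrow> (p islimpt atom U n \<gamma> \<longleftrightarrow> \<gamma> \<in> code_interval \<alpha> \<beta>))"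

end

theory Submission
  imports Defs
begin

lemma la_indep:
  fixes n :: "nat \<Rightarrow> 'a::euclidean_space"
  assumes fJ: "finite J" and inj: "inj_on n J" and ind: "independent (n ` J)"
    and u: "u \<notin> span (n ` J)" and t: "t \<noteq> 0" and J2: "J2 \<subseteq> J"
  shows "inj_on (\<lambda>j. n j + t *\<^sub>R u) J2 \<and> t *\<^sub>R u \<notin> (\<lambda>j. n j + t *\<^sub>R u) ` J2
     \<and> independent (insert (t *\<^sub>R u) ((\<lambda>j. n j + t *\<^sub>R u) ` J2))"
proof -
  define f where "f = (\<lambda>j. n j + t *\<^sub>R u)"
  define B where "B = insert (t *\<^sub>R u) (f ` J2)"
  define V where "V = span (insert u (n ` J2))"
  have fJ2: "finite J2" using fJ J2 finite_subset by blast
  have uV: "u \<in> V" unfolding V_def by (rule span_base) simp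
  have BV: "B \<subseteq> V"
  proof
    fix x assume "x \<in> B"
    then consider "x = t *\<^sub>R u" | j where "j \<in> J2" "x = n j + t *\<^sub>R u" unfolding B_def f_def by auto
    then show "x \<in> V"
    proof cases
      case 1 then show ?thesis using uV span_scale unfolding V_def by blast
    next
      case 2
      have "n j \<in> V" unfolding V_def using 2 by (intro span_base) auto
      then show ?thesis using 2 uV unfolding V_def by (simp add: span_add span_scale)
    qed
  qed
  have uB: "u \<in> span B"
  proof -
    have "(1/t) *\<^sub>R (t *\<^sub>R u) \<in> span B" unfolding B_def by (intro span_scale span_base) auto
    then show ?thesis using t by simp
  qed
  have nB: "n j \<in> span B" if "j \<in> J2" for j
  proof -
    have "f j - t *\<^sub>R u \<in> span B" unfolding B_def using that by (intro span_diff span_base) auto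
    then show ?thesis unfolding f_def by simp
  qed
  have VB: "V \<subseteq> span B" unfolding V_def
    by (rule span_minimal) (use uB nB in \<open>auto simp: subspace_span\<close>)
  have ind2: "independent (insert u (n ` J2))"
  proof (rule independent_insertI)
    show "u \<notin> span (n ` J2)" using u span_mono[of "n ` J2" "n ` J"] J2 by blast
    show "independent (n ` J2)" using ind J2 independent_mono by (meson image_mono)
  qed
  have uJ2: "u \<notin> n ` J2" using u J2 span_base by blast
  have cJ2: "card (n ` J2) = card J2" using inj J2 by (meson card_image inj_on_subset)
  have dV: "dim V = card J2 + 1" unfolding V_def
    using dim_eq_card_independent[OF ind2] uJ2 cJ2 fJ2 by simp
  have fB: "finite B" unfolding B_def using fJ2 by simp
  have cB: "card B \<le> card J2 + 1" unfolding B_def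
    by (metis Suc_eq_plus1 card_image_le card_insert_le_m1 diff_Suc_1 fJ2 finite_imageI le_trans zero_less_Suc)
  have "dim V \<le> card B" using span_card_ge_dim[OF BV VB fB] .
  then have cB2: "card B = card J2 + 1" using cB dV by simp
  have indB: "independent B" using card_le_dim_spanning[OF BV VB fB] cB2 dV by simp
  have nin: "t *\<^sub>R u \<notin> f ` J2"
  proof
    assume "t *\<^sub>R u \<in> f ` J2"
    then have "B = f ` J2" unfolding B_def by auto
    then show False using cB2 card_image_le[OF fJ2, of f] by simp
  qed
  have "card (f ` J2) = card J2" using cB2 nin fJ2 unfolding B_def by simp
  then have "inj_on f J2" using fJ2 eq_card_imp_inj_on by blast
  then show ?thesis using nin indB unfolding B_def f_def by simp
qed

lemma dual_vec:
  fixes n :: "nat \<Rightarrow> 'a::euclidean_space"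
  assumes inj: "inj_on n J" and ind: "independent (n ` J)"
  shows "\<exists>a\<in>span (n ` J). \<forall>j\<in>J. a \<bullet> n j = b j"
proof -
  define f where "f = (\<lambda>x. b (the_inv_into J n x))"
  obtain g :: "'a \<Rightarrow> real" where g: "linear g" "\<forall>x\<in>n ` J. g x = f x"
    using linear_independent_extend[OF ind] by blast
  define a0 where "a0 = (\<Sum>e\<in>Basis. g e *\<^sub>R e)"
  have a0: "a0 \<bullet> y = g y" for y
  proof -
    have "g y = g (\<Sum>e\<in>Basis. (y \<bullet> e) *\<^sub>R e)" by (simp add: euclidean_representation)
    also have "\<dots> = (\<Sum>e\<in>Basis. (y \<bullet> e) * g e)"
      using g(1) by (simp add: linear_sum linear_scale)
    also have "\<dots> = (\<Sum>e\<in>Basis. g e * (e \<bullet> y))" by (simp add: mult.commute inner_commute)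
    also have "\<dots> = a0 \<bullet> y" unfolding a0_def by (simp add: inner_sum_left)
    finally show ?thesis by simp
  qed
  obtain y z where yz: "y \<in> span (n ` J)" "\<And>w. w \<in> span (n ` J) \<Longrightarrow> orthogonal z w" "a0 = y + z"
    using orthogonal_subspace_decomp_exists by blast
  have "y \<bullet> n j = b j" if "j \<in> J" for j
  proof -
    have "orthogonal z (n j)" using yz(2) span_base that by blast
    then have "y \<bullet> n j = a0 \<bullet> n j" using yz(3) by (simp add: orthogonal_def inner_add_left)
    also have "\<dots> = b j" using a0 g(2) that inj unfolding f_def by (simp add: the_inv_into_f_f)
    finally show ?thesis .
  qed
  then show ?thesis using yz(1) by blast
qed

lemma unit_dir:
  fixes n :: "nat \<Rightarrow> 'a::euclidean_space"
  assumes fJ: "finite J" and inj: "inj_on n J" and ind: "independent (n ` J)"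
    and cJ: "card J < DIM('a)"
  shows "\<forall>\<^sub>F t in at_right 0. \<exists>u. norm u = 1 \<and> u \<notin> span (n ` J) \<and> (\<forall>j\<in>J. u \<bullet> n j = t * b j)"
proof -
  obtain a where a: "a \<in> span (n ` J)" "\<forall>j\<in>J. a \<bullet> n j = b j" using dual_vec[OF inj ind] by blast
  have "dim (n ` J) < DIM('a)" using dim_eq_card_independent[OF ind] card_image_le[OF fJ, of n] cJ by simp
  then obtain w where w: "w \<noteq> 0" "\<And>y. y \<in> span (n ` J) \<Longrightarrow> orthogonal w y"
    using orthogonal_to_subspace_exists by blast
  define w1 where "w1 = w /\<^sub>R norm w"
  have w1n: "norm w1 = 1" unfolding w1_def using w(1) by simp
  have w1o: "w1 \<bullet> y = 0" if "y \<in> span (n ` J)" for y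
    using w(2)[OF that] unfolding w1_def orthogonal_def by simp
  have aw: "a \<bullet> w1 = 0" using w1o[OF a(1)] by (simp add: inner_commute)
  have "\<exists>u. norm u = 1 \<and> u \<notin> span (n ` J) \<and> (\<forall>j\<in>J. u \<bullet> n j = t * b j)"
    if t: "0 < t" "t < 1 / (norm a + 1)" for t
  proof -
    have "t * norm a < 1"
    proof -
      have "t * norm a \<le> t * (norm a + 1)" using t by simp
      also have "\<dots> < 1" using t(2) less_divide_eq[of t 1 "norm a + 1"]
        by (smt (verit) norm_ge_zero)
      finally show ?thesis .
    qed
    then have ta: "(t * norm a)^2 < 1" using t
      by (metis abs_of_nonneg mult_nonneg_nonneg norm_ge_zero order_less_imp_le power_less_one_iff abs_square_less_1)
    define m where "m = sqrt (1 - (t * norm a)^2)"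
    have m: "m > 0" unfolding m_def using ta by simp
    have m2: "m^2 = 1 - (t * norm a)^2" unfolding m_def using ta by simp
    define u where "u = t *\<^sub>R a + m *\<^sub>R w1"
    have "(norm u)^2 = 1"
    proof -
      have "(norm u)^2 = u \<bullet> u" by (simp add: power2_norm_eq_inner)
      also have "\<dots> = t^2 * (a \<bullet> a) + m^2 * (w1 \<bullet> w1)"
        unfolding u_def using aw by (simp add: inner_add_left inner_add_right inner_commute power2_eq_square algebra_simps)
      also have "\<dots> = 1" using w1n m2 by (simp add: power2_norm_eq_inner[symmetric] power_mult_distrib)
      finally show ?thesis .
    qed
    then have nu: "norm u = 1" using norm_ge_zero[of u] by (auto simp: power2_eq_1_iff)
    have nsp: "u \<notin> span (n ` J)"
    proof
      assume "u \<in> span (n ` J)"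
      then have "u - t *\<^sub>R a \<in> span (n ` J)" using a(1) by (simp add: span_diff span_scale)
      then have "m *\<^sub>R w1 \<in> span (n ` J)" unfolding u_def by simp
      then have "(1/m) *\<^sub>R (m *\<^sub>R w1) \<in> span (n ` J)" by (rule span_scale)
      then have "w1 \<in> span (n ` J)" using m by simp
      then have "w1 \<bullet> w1 = 0" by (rule w1o)
      then show False using w1n by simp
    qed
    have "u \<bullet> n j = t * b j" if "j \<in> J" for j
    proof -
      have "w1 \<bullet> n j = 0" using w1o span_base that by blast
      then show ?thesis unfolding u_def using a(2) that by (simp add: inner_add_left)
    qed
    then show ?thesis using nu nsp by blast
  qed
  moreover have "(0::real) < 1 / (norm a + 1)" using norm_ge_zero[of a] by (smt (verit) divide_pos_pos)
  ultimately show ?thesis unfolding eventually_at_right_field by blast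
qed

definition atomN :: "(nat \<Rightarrow> 'a set) \<Rightarrow> nat set \<Rightarrow> nat set \<Rightarrow> 'a set" where
  "atomN U N \<gamma> = (\<Inter>i\<in>\<gamma>. U i) - (\<Union>j\<in>N - \<gamma>. U j)"

definition TP :: "nat set \<Rightarrow> (nat \<Rightarrow> 'a::euclidean_space) \<Rightarrow> (nat \<Rightarrow> real) \<Rightarrow> nat set \<Rightarrow> nat set \<Rightarrow> 'a \<Rightarrow> bool" where
  "TP N c r \<alpha> \<beta> x \<longleftrightarrow> \<alpha> \<subseteq> \<beta> \<and> \<beta> \<subseteq> N \<and> (\<forall>j\<in>\<alpha>. dist (c j) x < r j) \<and> (\<forall>j\<in>\<beta>-\<alpha>. dist (c j) x = r j)
     \<and> (\<forall>j\<in>N-\<beta>. r j < dist (c j) x) \<and> inj_on (\<lambda>j. x - c j) (\<beta>-\<alpha>)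
     \<and> independent ((\<lambda>j. x - c j) ` (\<beta>-\<alpha>))"

lemma eventually_small: "(0::real) < d \<Longrightarrow> \<forall>\<^sub>F t in at_right 0. t < d"
  unfolding eventually_at_right_field by auto

lemma eventually_small2: "(a::real) < b \<Longrightarrow> \<forall>\<^sub>F t in at_right 0. a + t < b"
  using eventually_small[of "b - a"] by (auto elim: eventually_mono)

lemma eventually_small3: "(b::real) < a \<Longrightarrow> \<forall>\<^sub>F t in at_right 0. b < a - t"
  using eventually_small[of "a - b"] by (auto elim: eventually_mono)

lemma sq_less: "0 \<le> (a::real) \<Longrightarrow> 0 \<le> b \<Longrightarrow> a < b \<longleftrightarrow> a^2 < b^2"
  using power_less_imp_less_base[of a 2 b] power_strict_mono[of a b 2] by auto

lemma sq_cmp: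
  fixes y :: "'a::euclidean_space"
  assumes "0 \<le> r" "(norm y)^2 = r^2 + e"
  shows "(norm y < r \<longleftrightarrow> e < 0) \<and> (norm y = r \<longleftrightarrow> e = 0) \<and> (r < norm y \<longleftrightarrow> 0 < e)"
proof -
  have "norm y < r \<longleftrightarrow> (norm y)^2 < r^2" using assms(1) sq_less norm_ge_zero by blast
  moreover have "norm y = r \<longleftrightarrow> (norm y)^2 = r^2" using assms(1) power2_eq_iff_nonneg norm_ge_zero by blast
  moreover have "r < norm y \<longleftrightarrow> r^2 < (norm y)^2" using assms(1) sq_less norm_ge_zero by blast
  ultimately show ?thesis using assms(2) by auto
qed

lemma local_pierce:
  fixes c :: "nat \<Rightarrow> 'a::euclidean_space"
  assumes fN: "finite N" and T: "TP N c r \<alpha> \<beta> x" and cd: "card (\<beta>-\<alpha>) < DIM('a)"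
    and s: "\<alpha> \<subseteq> \<alpha>'" "\<alpha>' \<subseteq> \<beta>'" "\<beta>' \<subseteq> \<beta>"
  shows "\<forall>\<^sub>F t in at_right 0. \<exists>u. norm u = 1 \<and> u \<notin> span ((\<lambda>j. x - c j) ` (\<beta>-\<alpha>))
            \<and> TP N c r \<alpha>' \<beta>' (x + t *\<^sub>R u)"
proof -
  define J where "J = \<beta> - \<alpha>"
  define n where "n = (\<lambda>j. x - c j)"
  define sg where "sg = (\<lambda>j. if j \<in> \<alpha>' then -1 else if j \<in> \<beta>' then 0 else (1::real))"
  have TT: "\<alpha> \<subseteq> \<beta>" "\<beta> \<subseteq> N" "\<forall>j\<in>\<alpha>. dist (c j) x < r j" "\<forall>j\<in>J. dist (c j) x = r j"
     "\<forall>j\<in>N-\<beta>. r j < dist (c j) x" "inj_on n J" "independent (n ` J)"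
    using T unfolding TP_def J_def n_def by auto
  have fJ: "finite J" unfolding J_def using TT(2) fN finite_subset by blast
  have nr: "norm (n j) = r j" if "j \<in> J" for j using TT(4) that unfolding n_def by (simp add: dist_norm norm_minus_commute)
  have E1: "\<forall>\<^sub>F t in at_right 0. \<exists>u. norm u = 1 \<and> u \<notin> span (n ` J) \<and> (\<forall>j\<in>J. u \<bullet> n j = t * (-1/2 + sg j))"
    using unit_dir[OF fJ TT(6) TT(7) cd[folded J_def], of "\<lambda>j. -1/2 + sg j"] by simp
  have E2: "\<forall>\<^sub>F t in at_right 0. \<forall>j\<in>\<alpha>. dist (c j) x + t < r j"
  proof (rule eventually_ball_finite)
    show "finite \<alpha>" using TT(1,2) fN by (meson finite_subset)
    show "\<forall>j\<in>\<alpha>. \<forall>\<^sub>F t in at_right 0. dist (c j) x + t < r j" using TT(3) eventually_small2 by blast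
  qed
  have E3: "\<forall>\<^sub>F t in at_right 0. \<forall>j\<in>N-\<beta>. r j < dist (c j) x - t"
  proof (rule eventually_ball_finite)
    show "finite (N - \<beta>)" using fN by simp
    show "\<forall>j\<in>N-\<beta>. \<forall>\<^sub>F t in at_right 0. r j < dist (c j) x - t" using TT(5) eventually_small3 by blast
  qed
  have E4: "\<forall>\<^sub>F t in at_right 0. (0::real) < t" by (simp add: eventually_at_right_less)
  have key: "\<exists>u. norm u = 1 \<and> u \<notin> span (n ` J) \<and> TP N c r \<alpha>' \<beta>' (x + t *\<^sub>R u)"
    if u: "norm u = 1" "u \<notin> span (n ` J)" "\<forall>j\<in>J. u \<bullet> n j = t * (-1/2 + sg j)"
      and e2: "\<forall>j\<in>\<alpha>. dist (c j) x + t < r j" and e3: "\<forall>j\<in>N-\<beta>. r j < dist (c j) x - t"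
      and t0: "0 < t" for u t
  proof -
    define y where "y = x + t *\<^sub>R u"
    have dy: "dist (c j) y \<le> dist (c j) x + t" for j
    proof -
      have "dist (c j) y \<le> dist (c j) x + dist x y" by (rule dist_triangle)
      also have "dist x y = t" unfolding y_def using u(1) t0 by (simp add: dist_norm)
      finally show ?thesis .
    qed
    have dy2: "dist (c j) x - t \<le> dist (c j) y" for j
    proof -
      have "dist (c j) x \<le> dist (c j) y + dist y x" by (rule dist_triangle)
      also have "dist y x = t" unfolding y_def using u(1) t0 by (simp add: dist_norm)
      finally show ?thesis by simp
    qed
    have sq: "(norm (y - c j))^2 = (r j)^2 + 2 * t^2 * sg j" if "j \<in> J" for j
    proof -
      have "y - c j = n j + t *\<^sub>R u" unfolding y_def n_def by simp
      then have "(norm (y - c j))^2 = (n j + t *\<^sub>R u) \<bullet> (n j + t *\<^sub>R u)" by (simp add: power2_norm_eq_inner)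
      also have "\<dots> = n j \<bullet> n j + 2 * t * (u \<bullet> n j) + t^2 * (u \<bullet> u)"
        by (simp add: inner_add_left inner_add_right inner_commute[of "n j" u] power2_eq_square) (simp add: algebra_simps)
      also have "\<dots> = (r j)^2 + 2 * t * (t * (-1/2 + sg j)) + t^2"
        using u(1,3) that nr[OF that] by (simp add: power2_norm_eq_inner[symmetric])
      also have "\<dots> = (r j)^2 + 2 * t^2 * sg j" by (simp add: power2_eq_square algebra_simps)
      finally show ?thesis .
    qed
    have rj0: "0 \<le> r j" if "j \<in> J" for j using nr[OF that] norm_ge_zero by metis
    have cmp: "(dist (c j) y < r j \<longleftrightarrow> sg j < 0) \<and> (dist (c j) y = r j \<longleftrightarrow> sg j = 0) \<and> (r j < dist (c j) y \<longleftrightarrow> 0 < sg j)"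
      if "j \<in> J" for j
    proof -
      have "(dist (c j) y < r j \<longleftrightarrow> 2 * t^2 * sg j < 0) \<and> (dist (c j) y = r j \<longleftrightarrow> 2 * t^2 * sg j = 0) \<and> (r j < dist (c j) y \<longleftrightarrow> 0 < 2 * t^2 * sg j)"
        using sq_cmp[OF rj0[OF that] sq[OF that]] norm_minus_commute[of "c j" y] by (simp only: dist_norm)
      moreover have p: "2 * t^2 > 0" using t0 by simp
      have "(2 * t^2 * sg j < 0 \<longleftrightarrow> sg j < 0)" using mult_less_cancel_left_pos[OF p, of "sg j" 0] by simp
      moreover have "(2 * t^2 * sg j = 0 \<longleftrightarrow> sg j = 0)" using p by simp
      moreover have "(0 < 2 * t^2 * sg j \<longleftrightarrow> 0 < sg j)" using mult_less_cancel_left_pos[OF p, of 0 "sg j"] by simp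
      ultimately show ?thesis by simp
    qed
    have J2: "\<beta>' - \<alpha>' \<subseteq> J" unfolding J_def using s by auto
    have LA: "inj_on (\<lambda>j. n j + t *\<^sub>R u) (\<beta>' - \<alpha>') \<and> independent (insert (t *\<^sub>R u) ((\<lambda>j. n j + t *\<^sub>R u) ` (\<beta>' - \<alpha>')))"
      using la_indep[OF fJ TT(6) TT(7) u(2) _ J2, of t] t0 by simp
    have eqf: "(\<lambda>j. y - c j) = (\<lambda>j. n j + t *\<^sub>R u)" unfolding y_def n_def by (auto simp: algebra_simps)
    have "TP N c r \<alpha>' \<beta>' y"
      unfolding TP_def
    proof (intro conjI ballI)
      show "\<alpha>' \<subseteq> \<beta>'" "\<beta>' \<subseteq> N" using s TT by auto
      show "dist (c j) y < r j" if "j \<in> \<alpha>'" for j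
      proof (cases "j \<in> \<alpha>")
        case True then have "dist (c j) x + t < r j" using e2 by blast
        then show ?thesis using dy[of j] by linarith
      next
        case False then have "j \<in> J" "sg j = -1" using that s unfolding J_def sg_def by auto
        then show ?thesis using cmp by simp
      qed
      show "dist (c j) y = r j" if "j \<in> \<beta>' - \<alpha>'" for j
      proof -
        have "j \<in> J" "sg j = 0" using that s unfolding J_def sg_def by auto
        then show ?thesis using cmp by simp
      qed
      show "r j < dist (c j) y" if "j \<in> N - \<beta>'" for j
      proof (cases "j \<in> \<beta>")
        case False then have "r j < dist (c j) x - t" using e3 that by blast
        then show ?thesis using dy2[of j] by linarith
      next
        case True then have "j \<in> J" "sg j = 1" using that s unfolding J_def sg_def by auto
        then show ?thesis using cmp by simp
      qed
      show "inj_on (\<lambda>j. y - c j) (\<beta>' - \<alpha>')" using LA eqf by simp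
      show "independent ((\<lambda>j. y - c j) ` (\<beta>' - \<alpha>'))" using LA eqf independent_mono[OF _ subset_insertI] by metis
    qed
    then show ?thesis using u unfolding y_def by blast
  qed
  have "\<forall>\<^sub>F t in at_right 0. \<exists>u. norm u = 1 \<and> u \<notin> span (n ` J) \<and> TP N c r \<alpha>' \<beta>' (x + t *\<^sub>R u)"
  proof -
    have "\<forall>\<^sub>F t in at_right 0. (\<exists>u. norm u = 1 \<and> u \<notin> span (n ` J) \<and> (\<forall>j\<in>J. u \<bullet> n j = t * (-1/2 + sg j)))
       \<and> (\<forall>j\<in>\<alpha>. dist (c j) x + t < r j) \<and> (\<forall>j\<in>N-\<beta>. r j < dist (c j) x - t) \<and> 0 < t"
      using E1 E2 E3 E4 by (simp add: eventually_conj_iff)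
    then show ?thesis
    proof (rule eventually_mono)
      fix t assume H: "(\<exists>u. norm u = 1 \<and> u \<notin> span (n ` J) \<and> (\<forall>j\<in>J. u \<bullet> n j = t * (-1/2 + sg j)))
       \<and> (\<forall>j\<in>\<alpha>. dist (c j) x + t < r j) \<and> (\<forall>j\<in>N-\<beta>. r j < dist (c j) x - t) \<and> 0 < t"
      then obtain u where "norm u = 1" "u \<notin> span (n ` J)" "\<forall>j\<in>J. u \<bullet> n j = t * (-1/2 + sg j)" by blast
      then show "\<exists>u. norm u = 1 \<and> u \<notin> span (n ` J) \<and> TP N c r \<alpha>' \<beta>' (x + t *\<^sub>R u)"
        using H by (intro key) auto
    qed
  qed
  then show ?thesis unfolding n_def J_def .
qed

lemma sphere_cut:
  fixes c0 p :: "'a::euclidean_space"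
  assumes A: "affine A" "c0 \<in> A" "p \<in> A" and d: "dist c0 p = r0" and r0: "0 < r0"
    and e: "0 < e" "e < r0" and ad: "aff_dim A = int m + 1" and m: "1 \<le> m"
  shows "is_dim_sphere (m - 1) (sphere c0 r0 \<inter> A \<inter> sphere p e)"
proof -
  define v where "v = p - c0"
  have vv: "v \<bullet> v = r0^2" using d unfolding v_def by (simp add: dist_norm power2_norm_eq_inner[symmetric] norm_minus_commute)
  define th where "th = 1 - e^2 / (2 * r0^2)"
  have r02: "r0^2 > 0" using r0 by simp
  have e2: "e^2 < r0^2" using e by (simp add: power_strict_mono)
  have th0: "0 < th" unfolding th_def using e2 r02 by (simp add: field_simps) (use r02 in linarith)
  have th1: "th < 1" unfolding th_def using e r02 by simp
  define q where "q = c0 + th *\<^sub>R v"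
  define h where "h = v \<bullet> q"
  define rho where "rho = sqrt (r0^2 * (1 - th^2))"
  have th2: "th^2 < 1" using th0 th1 by (simp add: power_less_one_iff abs_square_less_1)
  have rho: "rho > 0" unfolding rho_def using th2 r02 by simp
  have rho2: "rho^2 = r0^2 * (1 - th^2)" unfolding rho_def using th2 r02 by simp
  have key: "(dist c0 x = r0 \<and> dist p x = e) \<longleftrightarrow> (v \<bullet> x = h \<and> dist q x = rho)" for x
  proof -
    define w where "w = x - c0"
    define a where "a = w \<bullet> w"
    define b where "b = w \<bullet> v"
    have n1: "(dist c0 x)^2 = a" unfolding a_def w_def by (simp add: dist_norm power2_norm_eq_inner[symmetric] norm_minus_commute)
    have "x - p = w - v" unfolding w_def v_def by simp
    then have n2: "(dist p x)^2 = a - 2 * b + r0^2" unfolding a_def b_def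
      by (simp add: dist_norm norm_minus_commute[of p] power2_norm_eq_inner inner_diff_left inner_diff_right vv inner_commute[of v w])
    have "x - q = w - th *\<^sub>R v" unfolding w_def q_def by simp
    then have "(dist q x)^2 = (w - th *\<^sub>R v) \<bullet> (w - th *\<^sub>R v)"
      by (simp add: dist_norm norm_minus_commute[of q] power2_norm_eq_inner)
    also have "\<dots> = w \<bullet> w - 2 * th * (w \<bullet> v) + th^2 * (v \<bullet> v)"
      by (simp add: inner_diff_left inner_diff_right inner_commute[of v w] power2_eq_square algebra_simps)
    finally have n3: "(dist q x)^2 = a - 2 * th * b + th^2 * r0^2" unfolding a_def b_def vv .
    have n4: "v \<bullet> x = h \<longleftrightarrow> b = th * r0^2"
    proof -
      have "v \<bullet> x = v \<bullet> c0 + b" unfolding b_def w_def by (simp add: inner_diff_left inner_diff_right inner_commute[of _ v])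
      moreover have "h = v \<bullet> c0 + th * r0^2" unfolding h_def q_def using vv by (simp add: inner_add_right)
      ultimately show ?thesis by auto
    qed
    have eq1: "dist c0 x = r0 \<longleftrightarrow> a = r0^2" using n1 r0 power2_eq_iff_nonneg[of "dist c0 x" r0] by auto
    have eq2: "dist p x = e \<longleftrightarrow> a - 2 * b + r0^2 = e^2" using n2 e power2_eq_iff_nonneg[of "dist p x" e] by auto
    have eq3: "dist q x = rho \<longleftrightarrow> a - 2 * th * b + th^2 * r0^2 = rho^2" using n3 rho power2_eq_iff_nonneg[of "dist q x" rho] by auto
    have ee: "e^2 = 2 * r0^2 * (1 - th)" unfolding th_def using r02 by (simp add: field_simps)
    show ?thesis unfolding eq1 eq2 eq3 n4 rho2 ee
    proof
      assume H: "a = r0\<^sup>2 \<and> a - 2 * b + r0\<^sup>2 = 2 * r0\<^sup>2 * (1 - th)"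
      then have ha: "a = r0^2" and "a - 2 * b + r0\<^sup>2 = 2 * r0\<^sup>2 * (1 - th)" by auto
      then have hb: "b = th * r0^2" by (simp add: algebra_simps)
      then show "b = th * r0\<^sup>2 \<and> a - 2 * th * b + th\<^sup>2 * r0\<^sup>2 = r0\<^sup>2 * (1 - th\<^sup>2)" unfolding ha hb
        by (simp add: algebra_simps power2_eq_square)
    next
      assume H: "b = th * r0\<^sup>2 \<and> a - 2 * th * b + th\<^sup>2 * r0\<^sup>2 = r0\<^sup>2 * (1 - th\<^sup>2)"
      then have hb: "b = th * r0^2" and ha: "a - 2 * th * b + th\<^sup>2 * r0\<^sup>2 = r0\<^sup>2 * (1 - th\<^sup>2)" by auto
      from ha have "a - 2 * th * (th * r0^2) + th\<^sup>2 * r0\<^sup>2 = r0\<^sup>2 * (1 - th\<^sup>2)" by (simp only: hb)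
      then have "a = r0^2" by (simp add: algebra_simps power2_eq_square)
      then show "a = r0\<^sup>2 \<and> a - 2 * b + r0\<^sup>2 = 2 * r0\<^sup>2 * (1 - th)" unfolding hb by (simp add: algebra_simps)
    qed
  qed
  define H where "H = {x. v \<bullet> x = h}"
  have seteq: "sphere c0 r0 \<inter> A \<inter> sphere p e = sphere q rho \<inter> (A \<inter> H)"
  proof (rule set_eqI)
    fix x
    have "x \<in> sphere c0 r0 \<inter> A \<inter> sphere p e \<longleftrightarrow> (dist c0 x = r0 \<and> dist p x = e) \<and> x \<in> A" by auto
    moreover have "x \<in> sphere q rho \<inter> (A \<inter> H) \<longleftrightarrow> (v \<bullet> x = h \<and> dist q x = rho) \<and> x \<in> A"
      unfolding H_def by auto
    ultimately show "x \<in> sphere c0 r0 \<inter> A \<inter> sphere p e \<longleftrightarrow> x \<in> sphere q rho \<inter> (A \<inter> H)"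
      using key[of x] by blast
  qed
  have affAH: "affine (A \<inter> H)" unfolding H_def using A(1) by (simp add: affine_Int affine_hyperplane)
  have qA: "q \<in> A"
  proof -
    have "q = (1 - th) *\<^sub>R c0 + th *\<^sub>R p" unfolding q_def v_def by (simp add: algebra_simps)
    then show ?thesis using mem_affine[OF A(1) A(2) A(3), of "1 - th" th] by simp
  qed
  have qH: "q \<in> H" unfolding H_def h_def by (simp add: inner_commute)
  have c0H: "c0 \<notin> H"
  proof
    assume "c0 \<in> H"
    then have "v \<bullet> c0 = v \<bullet> c0 + th * r0^2" unfolding H_def h_def q_def using vv by (simp add: inner_add_right)
    then show False using th0 r02 by simp
  qed
  have "aff_dim (A \<inter> H) = aff_dim A - 1"
    using aff_dim_affine_Int_hyperplane[OF A(1), of v h] qA qH c0H A(2) unfolding H_def by auto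
  then have "aff_dim (A \<inter> H) = int (m - 1) + 1" using ad m by simp
  then show ?thesis unfolding is_dim_sphere_def seteq using rho affAH qA qH by blast
qed

lemma ev_ex: "\<forall>\<^sub>F t in at_right (0::real). P t \<Longrightarrow> \<exists>t>0. P t"
proof -
  assume "\<forall>\<^sub>F t in at_right (0::real). P t"
  then obtain b where "b > 0" "\<forall>y>0. y < b \<longrightarrow> P y" unfolding eventually_at_right_field by auto
  then show ?thesis by (intro exI[of _ "b/2"]) auto
qed

lemma TP_atom:
  assumes "TP N c r \<gamma> \<gamma> x"
  shows "x \<in> atomN (\<lambda>j. ball (c j) (r j)) N \<gamma>"
proof -
  have h: "\<forall>j\<in>\<gamma>. dist (c j) x < r j" "\<forall>j\<in>N-\<gamma>. r j < dist (c j) x" using assms unfolding TP_def by auto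
  have "x \<in> (\<Inter>i\<in>\<gamma>. ball (c i) (r i))" using h(1) by auto
  moreover have "x \<notin> (\<Union>j\<in>N - \<gamma>. ball (c j) (r j))"
  proof
    assume "x \<in> (\<Union>j\<in>N - \<gamma>. ball (c j) (r j))"
    then obtain j where "j \<in> N - \<gamma>" "dist (c j) x < r j" by auto
    then show False using h(2) by force
  qed
  ultimately show ?thesis unfolding atomN_def by blast
qed

lemma TP_limpt:
  fixes c :: "nat \<Rightarrow> 'a::euclidean_space"
  assumes fN: "finite N" and T: "TP N c r \<alpha> \<beta> x" and cd: "card (\<beta> - \<alpha>) < DIM('a)" and g: "\<gamma> \<subseteq> N"
  shows "x islimpt atomN (\<lambda>j. ball (c j) (r j)) N \<gamma> \<longleftrightarrow> \<alpha> \<subseteq> \<gamma> \<and> \<gamma> \<subseteq> \<beta>"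
proof
  assume L: "x islimpt atomN (\<lambda>j. ball (c j) (r j)) N \<gamma>"
  define T where "T = (\<Inter>j\<in>\<alpha>. ball (c j) (r j)) \<inter> (\<Inter>j\<in>N-\<beta>. - cball (c j) (r j))"
  have fa: "finite \<alpha>" using T fN unfolding TP_def by (meson finite_subset)
  have oT: "open T" unfolding T_def using fa fN by (intro open_Int open_INT) auto
  have h1: "\<forall>j\<in>\<alpha>. dist (c j) x < r j" and h2: "\<forall>j\<in>N-\<beta>. r j < dist (c j) x"
    using T unfolding TP_def by auto
  have xT: "x \<in> T" unfolding T_def
  proof (intro IntI INT_I)
    show "x \<in> ball (c j) (r j)" if "j \<in> \<alpha>" for j using h1 that by auto
    show "x \<in> - cball (c j) (r j)" if "j \<in> N - \<beta>" for j using h2 that by (auto simp: not_le)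
  qed
  obtain y where y: "y \<in> atomN (\<lambda>j. ball (c j) (r j)) N \<gamma>" "y \<in> T"
    using L oT xT unfolding islimpt_def by blast
  show "\<alpha> \<subseteq> \<gamma> \<and> \<gamma> \<subseteq> \<beta>"
  proof
    show "\<alpha> \<subseteq> \<gamma>"
    proof
      fix j assume j: "j \<in> \<alpha>"
      then have "j \<in> N" using T unfolding TP_def by auto
      moreover have "y \<in> ball (c j) (r j)" using y(2) j unfolding T_def by auto
      ultimately show "j \<in> \<gamma>" using y(1) unfolding atomN_def by auto
    qed
    show "\<gamma> \<subseteq> \<beta>"
    proof
      fix j assume j: "j \<in> \<gamma>"
      then have "y \<in> ball (c j) (r j)" using y(1) unfolding atomN_def by auto
      show "j \<in> \<beta>"
      proof (rule ccontr)
        assume "j \<notin> \<beta>"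
        then have "j \<in> N - \<beta>" using j g by auto
        then have "y \<in> - cball (c j) (r j)" using y(2) unfolding T_def by blast
        then show False using \<open>y \<in> ball (c j) (r j)\<close> by auto
      qed
    qed
  qed
next
  assume S: "\<alpha> \<subseteq> \<gamma> \<and> \<gamma> \<subseteq> \<beta>"
  show "x islimpt atomN (\<lambda>j. ball (c j) (r j)) N \<gamma>"
    unfolding islimpt_approachable
  proof (intro allI impI)
    fix e :: real assume e: "0 < e"
    have "\<forall>\<^sub>F t in at_right 0. (\<exists>u. norm u = 1 \<and> u \<notin> span ((\<lambda>j. x - c j) ` (\<beta>-\<alpha>))
            \<and> TP N c r \<gamma> \<gamma> (x + t *\<^sub>R u)) \<and> t < e"
      using local_pierce[OF fN T cd, of \<gamma> \<gamma>] S eventually_small[OF e] by (simp add: eventually_conj_iff)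
    then obtain t u where t: "t > 0" "t < e" "norm u = 1" "TP N c r \<gamma> \<gamma> (x + t *\<^sub>R u)"
      using ev_ex by blast
    have "x + t *\<^sub>R u \<in> atomN (\<lambda>j. ball (c j) (r j)) N \<gamma>" using TP_atom[OF t(4)] .
    moreover have "x + t *\<^sub>R u \<noteq> x" using t by auto
    moreover have "dist (x + t *\<^sub>R u) x < e" using t by (simp add: dist_norm)
    ultimately show "\<exists>x'\<in>atomN (\<lambda>j. ball (c j) (r j)) N \<gamma>. x' \<noteq> x \<and> dist x' x < e" by blast
  qed
qed

lemma TP_upd_a:
  assumes "TP M c r \<alpha> \<beta> x" "i \<notin> M" "e < dist p x"
  shows "TP (insert i M) (c(i := p)) (r(i := e)) \<alpha> \<beta> x"
proof -
  have iB: "i \<notin> \<beta>" using assms unfolding TP_def by auto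
  have im: "(\<lambda>j. x - (c(i := p)) j) ` (\<beta> - \<alpha>) = (\<lambda>j. x - c j) ` (\<beta> - \<alpha>)" using iB by auto
  have inj: "inj_on (\<lambda>j. x - (c(i := p)) j) (\<beta> - \<alpha>) = inj_on (\<lambda>j. x - c j) (\<beta> - \<alpha>)"
    using iB by (intro inj_on_cong) auto
  show ?thesis using assms iB unfolding TP_def im inj by auto
qed

lemma TP_upd_b:
  assumes "TP M c r \<alpha> \<beta> x" "i \<notin> M" "dist p x < e"
  shows "TP (insert i M) (c(i := p)) (r(i := e)) (insert i \<alpha>) (insert i \<beta>) x"
proof -
  have iB: "i \<notin> \<beta>" using assms unfolding TP_def by auto
  have d: "insert i \<beta> - insert i \<alpha> = \<beta> - \<alpha>" using iB by auto
  have d2: "insert i M - insert i \<beta> = M - \<beta>" using assms(2) by auto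
  have im: "(\<lambda>j. x - (c(i := p)) j) ` (\<beta> - \<alpha>) = (\<lambda>j. x - c j) ` (\<beta> - \<alpha>)" using iB by auto
  have inj: "inj_on (\<lambda>j. x - (c(i := p)) j) (\<beta> - \<alpha>) = inj_on (\<lambda>j. x - c j) (\<beta> - \<alpha>)"
    using iB by (intro inj_on_cong) auto
  have nM: "\<forall>j\<in>M. j \<noteq> i" using assms(2) by auto
  show ?thesis using assms(1,3) iB nM unfolding TP_def d d2 im inj by auto
qed

lemma TP_upd_c:
  assumes "TP M c r \<alpha> \<beta> x" "i \<notin> M" "dist p x = e"
    and "x - p \<notin> (\<lambda>j. x - c j) ` (\<beta> - \<alpha>)"
    and "independent (insert (x - p) ((\<lambda>j. x - c j) ` (\<beta> - \<alpha>)))"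
  shows "TP (insert i M) (c(i := p)) (r(i := e)) \<alpha> (insert i \<beta>) x"
proof -
  have iB: "i \<notin> \<beta>" "\<alpha> \<subseteq> \<beta>" "\<beta> \<subseteq> M" using assms unfolding TP_def by auto
  have d: "insert i \<beta> - \<alpha> = insert i (\<beta> - \<alpha>)" using iB by auto
  have d2: "insert i M - insert i \<beta> = M - \<beta>" using assms(2) by auto
  have im: "(\<lambda>j. x - (c(i := p)) j) ` (\<beta> - \<alpha>) = (\<lambda>j. x - c j) ` (\<beta> - \<alpha>)" using iB by auto
  have inj: "inj_on (\<lambda>j. x - (c(i := p)) j) (\<beta> - \<alpha>) = inj_on (\<lambda>j. x - c j) (\<beta> - \<alpha>)"
    using iB by (intro inj_on_cong) auto
  have im2: "(\<lambda>j. x - (c(i := p)) j) ` insert i (\<beta> - \<alpha>) = insert (x - p) ((\<lambda>j. x - c j) ` (\<beta> - \<alpha>))"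
    using im by simp
  have inj2: "inj_on (\<lambda>j. x - (c(i := p)) j) (insert i (\<beta> - \<alpha>))"
    using assms(1,4) iB inj im unfolding TP_def by (simp add: inj_on_insert)
  have nM: "\<forall>j\<in>M. j \<noteq> i" using assms(2) by auto
  show ?thesis using assms(1,3,5) iB inj2 nM unfolding TP_def d d2 im2 by (auto simp: dist_commute)
qed

definition WF :: "nat set \<Rightarrow> (nat \<Rightarrow> 'a::euclidean_space) \<Rightarrow> (nat \<Rightarrow> real) \<Rightarrow> bool" where
  "WF N c r \<longleftrightarrow> (\<forall>S \<subseteq> N.
        (1 \<le> card S \<and> card S \<le> DIM('a) \<longrightarrow>
           (\<Inter>i\<in>S. sphere (c i) (r i)) = {} \<or>
           is_dim_sphere (DIM('a) - card S) (\<Inter>i\<in>S. sphere (c i) (r i))) \<and>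
        (card S = DIM('a) + 1 \<longrightarrow> (\<Inter>i\<in>S. sphere (c i) (r i)) = {}))"

definition Inv :: "nat \<Rightarrow> nat set set \<Rightarrow> nat set \<Rightarrow> (nat \<Rightarrow> 'a::euclidean_space) \<Rightarrow> (nat \<Rightarrow> real) \<Rightarrow> bool" where
  "Inv k C N c r \<longleftrightarrow> (\<forall>j\<in>N. 0 < r j) \<and>
     (\<forall>\<gamma>. \<gamma> \<subseteq> N \<longrightarrow> (\<gamma> \<in> C \<longleftrightarrow> atomN (\<lambda>j. ball (c j) (r j)) N \<gamma> \<noteq> {})) \<and>
     WF N c r \<and>
     (\<forall>\<alpha> \<beta>. \<alpha> \<subseteq> \<beta> \<and> card (\<beta> - \<alpha>) \<le> k \<and> code_interval \<alpha> \<beta> \<subseteq> C \<longrightarrow> (\<exists>x. TP N c r \<alpha> \<beta> x))"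

lemma ev_sphere_avoid:
  fixes X :: "'a::euclidean_space set"
  assumes "closed X" "p \<notin> X"
  shows "\<forall>\<^sub>F e in at_right 0. X \<inter> sphere p e = {}"
proof -
  have "open (- X)" "p \<in> - X" using assms by auto
  then obtain d where d: "d > 0" "ball p d \<subseteq> - X" using open_contains_ball by blast
  show ?thesis using eventually_small[OF d(1)]
  proof (rule eventually_mono)
    fix e assume "e < d"
    then have "sphere p e \<subseteq> ball p d" by auto
    then show "X \<inter> sphere p e = {}" using d(2) by auto
  qed
qed

lemma step_lemma:
  fixes c :: "nat \<Rightarrow> 'a::euclidean_space"
  assumes dim: "DIM('a) = k + 1" and fN: "finite N" and UC: "\<Union>C = N"
    and st: "\<sigma> \<subseteq> \<tau>" "i \<notin> \<tau>" "card (\<tau> - \<sigma>) = k'" "k' \<le> k"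
    and sub: "code_interval \<sigma> \<tau> \<subseteq> code_del C i"
    and Ceq: "C = code_del C i \<union> code_interval (insert i \<sigma>) (insert i \<tau>)"
    and IH: "Inv k (code_del C i) (N - {i}) c r"
  shows "\<exists>(c' :: nat \<Rightarrow> 'a) r'. Inv k C N c' r'"
proof -
  define D where "D = code_del C i"
  define M where "M = N - {i}"
  define I where "I = code_interval (insert i \<sigma>) (insert i \<tau>)"
  have Ceq': "C = D \<union> I" using Ceq unfolding D_def I_def .
  have mem: "\<gamma> \<in> C \<longleftrightarrow> \<gamma> \<in> D \<or> \<gamma> \<in> I" for \<gamma> by (subst Ceq') simp
  have iN: "i \<in> N"
  proof -
    have "insert i \<sigma> \<in> code_interval (insert i \<sigma>) (insert i \<tau>)" using st(1) unfolding code_interval_def by auto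
    then have "insert i \<sigma> \<in> C" using mem unfolding I_def by blast
    then show ?thesis using UC by blast
  qed
  have NM: "N = insert i M" unfolding M_def using iN by auto
  have iM: "i \<notin> M" unfolding M_def by simp
  have fM: "finite M" unfolding M_def using fN by simp
  have Dsub: "\<gamma> \<subseteq> M \<and> i \<notin> \<gamma>" if g: "\<gamma> \<in> D" for \<gamma>
  proof -
    obtain c0 where "c0 \<in> C" "\<gamma> = c0 - {i}" using g unfolding D_def code_del_def by blast
    moreover have "c0 \<subseteq> N" using \<open>c0 \<in> C\<close> UC by blast
    ultimately show ?thesis unfolding M_def by blast
  qed
  have DC: "D \<subseteq> C" using mem by blast
  have iI: "I \<subseteq> C" using mem by blast
  have CnoI: "\<gamma> \<in> D" if "\<gamma> \<in> C" "i \<notin> \<gamma>" for \<gamma>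
  proof -
    have "\<gamma> \<in> D \<or> \<gamma> \<in> I" using that mem by blast
    then show ?thesis using that(2) unfolding I_def code_interval_def by blast
  qed
  have CI: "insert i \<sigma> \<subseteq> \<gamma> \<and> \<gamma> \<subseteq> insert i \<tau>" if "\<gamma> \<in> C" "i \<in> \<gamma>" for \<gamma>
  proof -
    have "\<gamma> \<in> D \<or> \<gamma> \<in> I" using that mem by blast
    moreover have "\<gamma> \<notin> D" using that(2) Dsub by blast
    ultimately show ?thesis unfolding I_def code_interval_def by blast
  qed
  have tM: "\<tau> \<subseteq> M"
  proof -
    have "\<tau> \<in> code_interval \<sigma> \<tau>" using st(1) unfolding code_interval_def by auto
    then have "\<tau> \<in> D" using sub unfolding D_def by blast
    then show ?thesis using Dsub by blast
  qed
  have iS: "i \<notin> \<sigma>" using st by auto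
  have IH': "(\<forall>j\<in>M. 0 < r j)" "\<And>\<gamma>. \<gamma> \<subseteq> M \<Longrightarrow> (\<gamma> \<in> D \<longleftrightarrow> atomN (\<lambda>j. ball (c j) (r j)) M \<gamma> \<noteq> {})"
     "WF M c r" "\<And>\<alpha> \<beta>. \<alpha> \<subseteq> \<beta> \<Longrightarrow> card (\<beta> - \<alpha>) \<le> k \<Longrightarrow> code_interval \<alpha> \<beta> \<subseteq> D \<Longrightarrow> (\<exists>x. TP M c r \<alpha> \<beta> x)"
    using IH unfolding Inv_def D_def M_def by auto
  have cdk: "card (\<beta> - \<alpha>) < DIM('a)" if "card (\<beta> - \<alpha>) \<le> k" for \<alpha> \<beta> :: "nat set" using that dim by simp
  obtain p where Tp: "TP M c r \<sigma> \<tau> p" using IH'(4)[OF st(1) _ sub[folded D_def]] st by auto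
  define J0 where "J0 = \<tau> - \<sigma>"
  define n where "n = (\<lambda>j. p - c j)"
  have TpD: "\<forall>j\<in>\<sigma>. dist (c j) p < r j" "\<forall>j\<in>J0. dist (c j) p = r j" "\<forall>j\<in>M-\<tau>. r j < dist (c j) p"
    "inj_on n J0" "independent (n ` J0)"
    using Tp unfolding TP_def J0_def n_def by auto
  have fT: "finite \<tau>" using finite_subset[OF tM fM] .
  have fJ0: "finite J0" unfolding J0_def using fT by simp
  have fS: "finite \<sigma>" using finite_subset[OF st(1) fT] .
  have cJ0: "card J0 \<le> k" unfolding J0_def using st by simp
  have Ea: "\<forall>\<^sub>F e in at_right 0. \<forall>j\<in>\<sigma>. dist (c j) p + e < r j"
    by (rule eventually_ball_finite[OF fS]) (use TpD(1) eventually_small2 in blast)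
  have Eb: "\<forall>\<^sub>F e in at_right 0. \<forall>j\<in>M-\<tau>. r j < dist (c j) p - e"
    by (rule eventually_ball_finite) (use fM TpD(3) eventually_small3 in auto)
  have Ef: "\<forall>\<^sub>F e in at_right 0. (0::real) < e" by (simp add: eventually_at_right_less)
  have Ec: "\<forall>\<^sub>F e in at_right 0. \<forall>ab\<in>Pow M \<times> Pow M.
      (fst ab \<subseteq> snd ab \<and> card (snd ab - fst ab) \<le> k \<and> code_interval (fst ab) (snd ab) \<subseteq> D)
        \<longrightarrow> (\<exists>x. TP M c r (fst ab) (snd ab) x \<and> e < dist p x)"
  proof (rule eventually_ball_finite)
    show "finite (Pow M \<times> Pow M)" using fM by simp
    show "\<forall>ab\<in>Pow M \<times> Pow M. \<forall>\<^sub>F e in at_right 0. (fst ab \<subseteq> snd ab \<and> card (snd ab - fst ab) \<le> k \<and> code_interval (fst ab) (snd ab) \<subseteq> D)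
        \<longrightarrow> (\<exists>x. TP M c r (fst ab) (snd ab) x \<and> e < dist p x)"
    proof
      fix ab :: "nat set \<times> nat set"
      obtain \<alpha> \<beta> where ab: "ab = (\<alpha>, \<beta>)" by (cases ab)
      show "\<forall>\<^sub>F e in at_right 0. (fst ab \<subseteq> snd ab \<and> card (snd ab - fst ab) \<le> k \<and> code_interval (fst ab) (snd ab) \<subseteq> D)
        \<longrightarrow> (\<exists>x. TP M c r (fst ab) (snd ab) x \<and> e < dist p x)"
      proof (cases "\<alpha> \<subseteq> \<beta> \<and> card (\<beta> - \<alpha>) \<le> k \<and> code_interval \<alpha> \<beta> \<subseteq> D")
        case False then show ?thesis unfolding ab by (intro always_eventually) auto
      next
        case True
        then obtain x where x: "TP M c r \<alpha> \<beta> x" using IH'(4) by blast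
        have "\<exists>x'. TP M c r \<alpha> \<beta> x' \<and> x' \<noteq> p"
        proof (cases "x = p")
          case False then show ?thesis using x by blast
        next
          case True
          have "\<forall>\<^sub>F t in at_right 0. (\<exists>u. norm u = 1 \<and> u \<notin> span ((\<lambda>j. x - c j) ` (\<beta> - \<alpha>)) \<and> TP M c r \<alpha> \<beta> (x + t *\<^sub>R u))"
            using local_pierce[OF fM x cdk, of \<alpha> \<beta>] \<open>\<alpha> \<subseteq> \<beta> \<and> card (\<beta> - \<alpha>) \<le> k \<and> code_interval \<alpha> \<beta> \<subseteq> D\<close> by auto
          then obtain t u where tu: "t > 0" "norm u = 1" "TP M c r \<alpha> \<beta> (x + t *\<^sub>R u)" using ev_ex by blast
          have "x + t *\<^sub>R u \<noteq> p" using tu True by auto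
          then show ?thesis using tu by blast
        qed
        then obtain x' where x': "TP M c r \<alpha> \<beta> x'" "x' \<noteq> p" by blast
        have "\<forall>\<^sub>F e in at_right 0. e < dist p x'" using x'(2) by (intro eventually_small) simp
        then show ?thesis unfolding ab by (rule eventually_mono) (use x' in auto)
      qed
    qed
  qed
  have Ed: "\<forall>\<^sub>F e in at_right 0. \<forall>ab\<in>Pow M \<times> Pow M.
      (\<sigma> \<subseteq> fst ab \<and> fst ab \<subseteq> snd ab \<and> snd ab \<subseteq> \<tau>)
        \<longrightarrow> (\<exists>u. norm u = 1 \<and> u \<notin> span (n ` J0) \<and> TP M c r (fst ab) (snd ab) (p + e *\<^sub>R u))"
  proof (rule eventually_ball_finite)
    show "finite (Pow M \<times> Pow M)" using fM by simp
    show "\<forall>ab\<in>Pow M \<times> Pow M. \<forall>\<^sub>F e in at_right 0. (\<sigma> \<subseteq> fst ab \<and> fst ab \<subseteq> snd ab \<and> snd ab \<subseteq> \<tau>)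
        \<longrightarrow> (\<exists>u. norm u = 1 \<and> u \<notin> span (n ` J0) \<and> TP M c r (fst ab) (snd ab) (p + e *\<^sub>R u))"
    proof
      fix ab :: "nat set \<times> nat set"
      obtain \<alpha> \<beta> where ab: "ab = (\<alpha>, \<beta>)" by (cases ab)
      show "\<forall>\<^sub>F e in at_right 0. (\<sigma> \<subseteq> fst ab \<and> fst ab \<subseteq> snd ab \<and> snd ab \<subseteq> \<tau>)
        \<longrightarrow> (\<exists>u. norm u = 1 \<and> u \<notin> span (n ` J0) \<and> TP M c r (fst ab) (snd ab) (p + e *\<^sub>R u))"
      proof (cases "\<sigma> \<subseteq> \<alpha> \<and> \<alpha> \<subseteq> \<beta> \<and> \<beta> \<subseteq> \<tau>")
        case False then show ?thesis unfolding ab by (intro always_eventually) auto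
      next
        case True
        have "card (\<tau> - \<sigma>) < DIM('a)" using st dim by simp
        then have "\<forall>\<^sub>F t in at_right 0. (\<exists>u. norm u = 1 \<and> u \<notin> span ((\<lambda>j. p - c j) ` (\<tau> - \<sigma>)) \<and> TP M c r \<alpha> \<beta> (p + t *\<^sub>R u))"
          using local_pierce[OF fM Tp, of \<alpha> \<beta>] True by auto
        then show ?thesis unfolding ab n_def J0_def by (rule eventually_mono) auto
      qed
    qed
  qed
  have WFM: "\<And>S. S \<subseteq> M \<Longrightarrow> 1 \<le> card S \<Longrightarrow> card S \<le> DIM('a) \<Longrightarrow>
       (\<Inter>j\<in>S. sphere (c j) (r j)) = {} \<or> is_dim_sphere (DIM('a) - card S) (\<Inter>j\<in>S. sphere (c j) (r j))"
    using IH'(3) unfolding WF_def by blast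
  have Ee: "\<forall>\<^sub>F e in at_right 0. \<forall>S\<in>Pow M. S \<noteq> {} \<longrightarrow>
      ((\<Inter>j\<in>S. sphere (c j) (r j)) \<inter> sphere p e = {} \<or>
       (S \<subseteq> J0 \<and> is_dim_sphere (DIM('a) - card S - 1) ((\<Inter>j\<in>S. sphere (c j) (r j)) \<inter> sphere p e)))"
  proof (rule eventually_ball_finite)
    show "finite (Pow M)" using fM by simp
    show "\<forall>S\<in>Pow M. \<forall>\<^sub>F e in at_right 0. S \<noteq> {} \<longrightarrow>
      ((\<Inter>j\<in>S. sphere (c j) (r j)) \<inter> sphere p e = {} \<or>
       (S \<subseteq> J0 \<and> is_dim_sphere (DIM('a) - card S - 1) ((\<Inter>j\<in>S. sphere (c j) (r j)) \<inter> sphere p e)))"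
    proof
      fix S assume SM: "S \<in> Pow M"
      define X where "X = (\<Inter>j\<in>S. sphere (c j) (r j))"
      have cX: "closed X" unfolding X_def by (intro closed_INT) auto
      have "\<forall>\<^sub>F e in at_right 0. S \<noteq> {} \<longrightarrow>
        (X \<inter> sphere p e = {} \<or>
         (S \<subseteq> J0 \<and> is_dim_sphere (DIM('a) - card S - 1) (X \<inter> sphere p e)))"
      proof (cases "p \<in> X")
        case False
        show ?thesis using ev_sphere_avoid[OF cX False] by (rule eventually_mono) auto
      next
        case True
        have SJ: "S \<subseteq> J0"
        proof
          fix j assume j: "j \<in> S"
          then have jM: "j \<in> M" using SM by auto
          have dj: "dist (c j) p = r j" using True j unfolding X_def by auto
          have "j \<notin> \<sigma>" using TpD(1) dj by force
          moreover have "j \<in> \<tau>" using TpD(3) dj jM by force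
          ultimately show "j \<in> J0" unfolding J0_def by auto
        qed
        have fSS: "finite S" using finite_subset[OF SJ fJ0] .
        have cS: "card S \<le> k" using card_mono[OF fJ0 SJ] cJ0 by simp
        show ?thesis
        proof (cases "S = {}")
          case True then show ?thesis by simp
        next
          case False
          have c1: "1 \<le> card S" using False fSS by (simp add: Suc_le_eq card_gt_0_iff)
          have "X = {} \<or> is_dim_sphere (DIM('a) - card S) X" unfolding X_def
            using WFM[of S] SM c1 cS dim by auto
          then have "is_dim_sphere (DIM('a) - card S) X" using True by auto
          then obtain c0 r0 A where sp: "0 < r0" "affine A" "c0 \<in> A" "aff_dim A = int (DIM('a) - card S) + 1"
              "X = sphere c0 r0 \<inter> A" unfolding is_dim_sphere_def by blast
          have pA: "p \<in> A" "dist c0 p = r0" using True sp(5) by auto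
          have m1: "1 \<le> DIM('a) - card S" using cS dim by simp
          have "\<forall>\<^sub>F e in at_right 0. e < r0 \<and> 0 < e"
            using eventually_small[OF sp(1)] eventually_at_right_less[of "0::real"] by (simp add: eventually_conj_iff)
          then show ?thesis
          proof (rule eventually_mono)
            fix e assume e: "e < r0 \<and> 0 < e"
            have "is_dim_sphere (DIM('a) - card S - 1) (sphere c0 r0 \<inter> A \<inter> sphere p e)"
              using sphere_cut[OF sp(2) sp(3) pA(1) pA(2) sp(1) _ _ sp(4) m1] e by auto
            then show "S \<noteq> {} \<longrightarrow> X \<inter> sphere p e = {} \<or> S \<subseteq> J0 \<and> is_dim_sphere (DIM('a) - card S - 1) (X \<inter> sphere p e)"
              using SJ sp(5) by auto
          qed
        qed
      qed
      then show "\<forall>\<^sub>F e in at_right 0. S \<noteq> {} \<longrightarrow>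
        ((\<Inter>j\<in>S. sphere (c j) (r j)) \<inter> sphere p e = {} \<or>
         (S \<subseteq> J0 \<and> is_dim_sphere (DIM('a) - card S - 1) ((\<Inter>j\<in>S. sphere (c j) (r j)) \<inter> sphere p e)))"
        unfolding X_def .
    qed
  qed
  have "\<forall>\<^sub>F e in at_right 0. (\<forall>j\<in>\<sigma>. dist (c j) p + e < r j) \<and> (\<forall>j\<in>M-\<tau>. r j < dist (c j) p - e) \<and> 0 < e
     \<and> (\<forall>ab\<in>Pow M \<times> Pow M.
      (fst ab \<subseteq> snd ab \<and> card (snd ab - fst ab) \<le> k \<and> code_interval (fst ab) (snd ab) \<subseteq> D)
        \<longrightarrow> (\<exists>x. TP M c r (fst ab) (snd ab) x \<and> e < dist p x))
     \<and> (\<forall>ab\<in>Pow M \<times> Pow M.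
      (\<sigma> \<subseteq> fst ab \<and> fst ab \<subseteq> snd ab \<and> snd ab \<subseteq> \<tau>)
        \<longrightarrow> (\<exists>u. norm u = 1 \<and> u \<notin> span (n ` J0) \<and> TP M c r (fst ab) (snd ab) (p + e *\<^sub>R u)))
     \<and> (\<forall>S\<in>Pow M. S \<noteq> {} \<longrightarrow>
      ((\<Inter>j\<in>S. sphere (c j) (r j)) \<inter> sphere p e = {} \<or>
       (S \<subseteq> J0 \<and> is_dim_sphere (DIM('a) - card S - 1) ((\<Inter>j\<in>S. sphere (c j) (r j)) \<inter> sphere p e))))"
    using Ea Eb Ef Ec Ed Ee by (simp only: eventually_conj_iff)
  then obtain e where e0: "e > 0" and ea: "\<forall>j\<in>\<sigma>. dist (c j) p + e < r j"
    and eb: "\<forall>j\<in>M-\<tau>. r j < dist (c j) p - e"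
    and ec: "\<forall>ab\<in>Pow M \<times> Pow M.
      (fst ab \<subseteq> snd ab \<and> card (snd ab - fst ab) \<le> k \<and> code_interval (fst ab) (snd ab) \<subseteq> D)
        \<longrightarrow> (\<exists>x. TP M c r (fst ab) (snd ab) x \<and> e < dist p x)"
    and ed: "\<forall>ab\<in>Pow M \<times> Pow M.
      (\<sigma> \<subseteq> fst ab \<and> fst ab \<subseteq> snd ab \<and> snd ab \<subseteq> \<tau>)
        \<longrightarrow> (\<exists>u. norm u = 1 \<and> u \<notin> span (n ` J0) \<and> TP M c r (fst ab) (snd ab) (p + e *\<^sub>R u))"
    and ee: "\<forall>S\<in>Pow M. S \<noteq> {} \<longrightarrow>
      ((\<Inter>j\<in>S. sphere (c j) (r j)) \<inter> sphere p e = {} \<or>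
       (S \<subseteq> J0 \<and> is_dim_sphere (DIM('a) - card S - 1) ((\<Inter>j\<in>S. sphere (c j) (r j)) \<inter> sphere p e)))"
    using ev_ex by blast
  define c' where "c' = c(i := p)"
  define r' where "r' = r(i := e)"
  have cdts: "card (\<tau> - \<sigma>) < DIM('a)" using st dim by simp
  have P4: "\<exists>x. TP N c' r' \<alpha> \<beta> x"
    if ab: "\<alpha> \<subseteq> \<beta>" "card (\<beta> - \<alpha>) \<le> k" "code_interval \<alpha> \<beta> \<subseteq> C" for \<alpha> \<beta>
  proof -
    have aC: "\<alpha> \<in> C" "\<beta> \<in> C" using ab unfolding code_interval_def by auto
    consider (A) "i \<notin> \<beta>" | (B) "i \<in> \<alpha>" | (Cc) "i \<in> \<beta>" "i \<notin> \<alpha>" by blast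
    then show ?thesis
    proof cases
      case A
      have iD: "code_interval \<alpha> \<beta> \<subseteq> D"
      proof
        fix \<gamma> assume g: "\<gamma> \<in> code_interval \<alpha> \<beta>"
        then have "\<gamma> \<in> C" "i \<notin> \<gamma>" using ab(3) A unfolding code_interval_def by auto
        then show "\<gamma> \<in> D" by (rule CnoI)
      qed
      have "\<beta> \<in> D" using iD ab(1) unfolding code_interval_def by auto
      then have bM: "\<beta> \<subseteq> M" using Dsub by blast
      then have PM: "(\<alpha>, \<beta>) \<in> Pow M \<times> Pow M" using ab(1) by auto
      obtain x where x: "TP M c r \<alpha> \<beta> x" "e < dist p x" using ec[rule_format, OF PM] ab(1,2) iD by auto
      have "TP (insert i M) c' r' \<alpha> \<beta> x" unfolding c'_def r'_def by (rule TP_upd_a[OF x(1) iM x(2)])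
      then show ?thesis unfolding NM by blast
    next
      case B
      define \<alpha>0 where "\<alpha>0 = \<alpha> - {i}"
      define \<beta>0 where "\<beta>0 = \<beta> - {i}"
      have h1: "insert i \<sigma> \<subseteq> \<alpha>" using CI[OF aC(1) B] by auto
      have h2: "\<beta> \<subseteq> insert i \<tau>" using CI[OF aC(2)] B ab(1) by auto
      have s1: "\<sigma> \<subseteq> \<alpha>0" "\<alpha>0 \<subseteq> \<beta>0" "\<beta>0 \<subseteq> \<tau>" using h1 h2 ab(1) iS unfolding \<alpha>0_def \<beta>0_def by auto
      have "\<forall>\<^sub>F t in at_right 0. (\<exists>u. norm u = 1 \<and> u \<notin> span ((\<lambda>j. p - c j) ` (\<tau> - \<sigma>)) \<and> TP M c r \<alpha>0 \<beta>0 (p + t *\<^sub>R u)) \<and> t < e"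
        using local_pierce[OF fM Tp cdts s1] eventually_small[OF e0] by (simp add: eventually_conj_iff)
      then obtain t u where tu: "t > 0" "t < e" "norm u = 1" "TP M c r \<alpha>0 \<beta>0 (p + t *\<^sub>R u)"
        using ev_ex by blast
      have "dist p (p + t *\<^sub>R u) < e" using tu by (simp add: dist_norm)
      then have "TP (insert i M) c' r' (insert i \<alpha>0) (insert i \<beta>0) (p + t *\<^sub>R u)"
        unfolding c'_def r'_def by (rule TP_upd_b[OF tu(4) iM])
      moreover have "insert i \<alpha>0 = \<alpha>" "insert i \<beta>0 = \<beta>" using B ab(1) unfolding \<alpha>0_def \<beta>0_def by auto
      ultimately show ?thesis unfolding NM by auto
    next
      case Cc
      define \<beta>0 where "\<beta>0 = \<beta> - {i}"
      have "insert i \<alpha> \<in> code_interval \<alpha> \<beta>" using Cc ab(1) unfolding code_interval_def by auto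
      then have "insert i \<alpha> \<in> C" using ab(3) by blast
      then have "insert i \<sigma> \<subseteq> insert i \<alpha>" using CI by blast
      then have s0: "\<sigma> \<subseteq> \<alpha>" using iS by auto
      have h2: "\<beta> \<subseteq> insert i \<tau>" using CI[OF aC(2) Cc(1)] by auto
      have s1: "\<alpha> \<subseteq> \<beta>0" "\<beta>0 \<subseteq> \<tau>" using h2 ab(1) Cc unfolding \<beta>0_def by auto
      have PM: "(\<alpha>, \<beta>0) \<in> Pow M \<times> Pow M" using s1 tM by auto
      obtain u where u: "norm u = 1" "u \<notin> span (n ` J0)" "TP M c r \<alpha> \<beta>0 (p + e *\<^sub>R u)"
        using ed[rule_format, OF PM] s0 s1 by auto
      define y where "y = p + e *\<^sub>R u"
      have J2: "\<beta>0 - \<alpha> \<subseteq> J0" using s0 s1 unfolding J0_def by auto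
      have LA: "inj_on (\<lambda>j. n j + e *\<^sub>R u) (\<beta>0 - \<alpha>) \<and> e *\<^sub>R u \<notin> (\<lambda>j. n j + e *\<^sub>R u) ` (\<beta>0 - \<alpha>)
          \<and> independent (insert (e *\<^sub>R u) ((\<lambda>j. n j + e *\<^sub>R u) ` (\<beta>0 - \<alpha>)))"
        using la_indep[OF fJ0 TpD(4) TpD(5) u(2) _ J2, of e] e0 by simp
      have fy: "(\<lambda>j. y - c j) = (\<lambda>j. n j + e *\<^sub>R u)" unfolding y_def n_def by (rule ext) (simp add: algebra_simps)
      have yp: "y - p = e *\<^sub>R u" unfolding y_def by simp
      have dy: "dist p y = e" unfolding y_def using u(1) e0 by (simp add: dist_norm)
      have g1: "y - p \<notin> (\<lambda>j. y - c j) ` (\<beta>0 - \<alpha>)" unfolding fy yp using LA by blast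
      have g2: "independent (insert (y - p) ((\<lambda>j. y - c j) ` (\<beta>0 - \<alpha>)))" unfolding fy yp using LA by blast
      have "TP (insert i M) c' r' \<alpha> (insert i \<beta>0) y" unfolding c'_def r'_def
        by (rule TP_upd_c[OF u(3)[folded y_def] iM dy g1 g2])
      moreover have "insert i \<beta>0 = \<beta>" using Cc unfolding \<beta>0_def by auto
      ultimately show ?thesis unfolding NM by auto
    qed
  qed
  have P2: "\<gamma> \<in> C \<longleftrightarrow> atomN (\<lambda>j. ball (c' j) (r' j)) N \<gamma> \<noteq> {}" if g: "\<gamma> \<subseteq> N" for \<gamma>
  proof
    assume "\<gamma> \<in> C"
    then have "code_interval \<gamma> \<gamma> \<subseteq> C" unfolding code_interval_def by auto
    then obtain x where "TP N c' r' \<gamma> \<gamma> x" using P4[of \<gamma> \<gamma>] by auto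
    then show "atomN (\<lambda>j. ball (c' j) (r' j)) N \<gamma> \<noteq> {}" using TP_atom by blast
  next
    assume "atomN (\<lambda>j. ball (c' j) (r' j)) N \<gamma> \<noteq> {}"
    then obtain x where x: "x \<in> atomN (\<lambda>j. ball (c' j) (r' j)) N \<gamma>" by blast
    have xin: "\<forall>j\<in>\<gamma>. x \<in> ball (c' j) (r' j)" and xout: "\<forall>j\<in>N-\<gamma>. x \<notin> ball (c' j) (r' j)"
      using x unfolding atomN_def by auto
    show "\<gamma> \<in> C"
    proof (cases "i \<in> \<gamma>")
      case False
      have gM: "\<gamma> \<subseteq> M" using g False unfolding M_def by auto
      have "x \<in> atomN (\<lambda>j. ball (c j) (r j)) M \<gamma>"
      proof -
        have "\<forall>j\<in>\<gamma>. x \<in> ball (c j) (r j)"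
        proof
          fix j assume "j \<in> \<gamma>"
          moreover then have "j \<noteq> i" using False by auto
          ultimately show "x \<in> ball (c j) (r j)" using xin unfolding c'_def r'_def by auto
        qed
        moreover have "\<forall>j\<in>M-\<gamma>. x \<notin> ball (c j) (r j)"
        proof
          fix j assume j: "j \<in> M - \<gamma>"
          then have "j \<noteq> i" "j \<in> N - \<gamma>" unfolding M_def by auto
          then have "x \<notin> ball (c' j) (r' j)" using xout by blast
          then show "x \<notin> ball (c j) (r j)" using \<open>j \<noteq> i\<close> unfolding c'_def r'_def by simp
        qed
        ultimately show ?thesis unfolding atomN_def by blast
      qed
      then have "\<gamma> \<in> D" using IH'(2)[OF gM] by blast
      then show ?thesis using DC by blast
    next
      case True
      have xp: "dist p x < e" using xin True unfolding c'_def r'_def by auto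
      have "insert i \<sigma> \<subseteq> \<gamma>"
      proof
        fix j assume j: "j \<in> insert i \<sigma>"
        show "j \<in> \<gamma>"
        proof (cases "j = i")
          case True then show ?thesis using \<open>i \<in> \<gamma>\<close> by simp
        next
          case False
          then have js: "j \<in> \<sigma>" using j by auto
          have "dist (c j) x \<le> dist (c j) p + dist p x" by (rule dist_triangle)
          then have "dist (c j) x < r j" using ea js xp by force
          then have xb: "x \<in> ball (c' j) (r' j)" using False unfolding c'_def r'_def by simp
          have "j \<in> N" using js st(1) tM unfolding M_def by auto
          then show ?thesis using xout xb by blast
        qed
      qed
      moreover have "\<gamma> \<subseteq> insert i \<tau>"
      proof
        fix j assume j: "j \<in> \<gamma>"
        show "j \<in> insert i \<tau>"
        proof (rule ccontr)
          assume nj: "j \<notin> insert i \<tau>"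
          then have jM: "j \<in> M - \<tau>" using j g unfolding M_def by auto
          have "dist (c j) x < r j" using xin j nj unfolding c'_def r'_def by auto
          moreover have "dist (c j) p \<le> dist (c j) x + dist x p" by (rule dist_triangle)
          moreover have "r j < dist (c j) p - e" using eb jM by blast
          ultimately show False using xp by (simp add: dist_commute)
        qed
      qed
      ultimately have "\<gamma> \<in> I" unfolding I_def code_interval_def by blast
      then show ?thesis using iI by blast
    qed
  qed
  have P3: "WF N c' r'"
    unfolding WF_def
  proof (intro allI impI)
    fix S assume SN: "S \<subseteq> N"
    have fSN: "finite S" using finite_subset[OF SN fN] .
    show "(1 \<le> card S \<and> card S \<le> DIM('a) \<longrightarrow>
           (\<Inter>j\<in>S. sphere (c' j) (r' j)) = {} \<or> is_dim_sphere (DIM('a) - card S) (\<Inter>j\<in>S. sphere (c' j) (r' j))) \<and>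
          (card S = DIM('a) + 1 \<longrightarrow> (\<Inter>j\<in>S. sphere (c' j) (r' j)) = {})"
    proof (cases "i \<in> S")
      case False
      have SM: "S \<subseteq> M" using SN False unfolding M_def by auto
      have eq: "(\<Inter>j\<in>S. sphere (c' j) (r' j)) = (\<Inter>j\<in>S. sphere (c j) (r j))"
        by (rule INF_cong[OF refl]) (use False in \<open>auto simp: c'_def r'_def\<close>)
      have W: "\<forall>S \<subseteq> M.
        (1 \<le> card S \<and> card S \<le> DIM('a) \<longrightarrow>
           (\<Inter>i\<in>S. sphere (c i) (r i)) = {} \<or>
           is_dim_sphere (DIM('a) - card S) (\<Inter>i\<in>S. sphere (c i) (r i))) \<and>
        (card S = DIM('a) + 1 \<longrightarrow> (\<Inter>i\<in>S. sphere (c i) (r i)) = {})" using IH'(3) unfolding WF_def .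
      show ?thesis unfolding eq using W[rule_format, OF SM] by assumption
    next
      case True
      define S0 where "S0 = S - {i}"
      have SS: "S = insert i S0" "i \<notin> S0" using True unfolding S0_def by auto
      have fS0: "finite S0" using fSN unfolding S0_def by simp
      have cS: "card S = Suc (card S0)" using SS fS0 by simp
      have eq: "(\<Inter>j\<in>S. sphere (c' j) (r' j)) = (\<Inter>j\<in>S0. sphere (c j) (r j)) \<inter> sphere p e"
      proof -
        have "(\<Inter>j\<in>S0. sphere (c' j) (r' j)) = (\<Inter>j\<in>S0. sphere (c j) (r j))"
          by (rule INF_cong[OF refl]) (use SS(2) in \<open>auto simp: c'_def r'_def\<close>)
        then show ?thesis unfolding SS(1) c'_def r'_def by auto
      qed
      show ?thesis
      proof (cases "S0 = {}")
        case True
        have eq1: "(\<Inter>j\<in>S. sphere (c' j) (r' j)) = sphere p e" using eq True by simp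
        have c1: "card S = 1" using cS True by simp
        have D1: "DIM('a) \<ge> 1" using DIM_positive[where 'a='a] by linarith
        have "int (DIM('a)) = int (DIM('a) - 1) + 1" using D1 by simp
        then have "0 < e \<and> affine (UNIV::'a set) \<and> p \<in> UNIV \<and> aff_dim (UNIV::'a set) = int (DIM('a) - 1) + 1 \<and> sphere p e = sphere p e \<inter> UNIV"
          using e0 by (simp add: aff_dim_UNIV)
        then have "is_dim_sphere (DIM('a) - 1) (sphere p e)" unfolding is_dim_sphere_def by blast
        then show ?thesis unfolding eq1 c1 by simp
      next
        case False
        have S0M: "S0 \<in> Pow M" using SN unfolding S0_def M_def by auto
        from ee[rule_format, OF S0M False]
        show ?thesis
        proof
          assume "(\<Inter>j\<in>S0. sphere (c j) (r j)) \<inter> sphere p e = {}"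
          then show ?thesis unfolding eq by simp
        next
          assume H: "S0 \<subseteq> J0 \<and> is_dim_sphere (DIM('a) - card S0 - 1) ((\<Inter>j\<in>S0. sphere (c j) (r j)) \<inter> sphere p e)"
          have "card S0 \<le> card J0" using card_mono[OF fJ0 conjunct1[OF H]] .
          then have "card S0 \<le> k" using cJ0 by linarith
          then have "card S \<le> DIM('a)" using cS dim by simp
          moreover have "DIM('a) - card S = DIM('a) - card S0 - 1" using cS by simp
          ultimately show ?thesis unfolding eq using H by auto
        qed
      qed
    qed
  qed
  have P1: "\<forall>j\<in>N. 0 < r' j" using IH'(1) e0 unfolding r'_def M_def by auto
  have P4': "\<forall>\<alpha> \<beta>. \<alpha> \<subseteq> \<beta> \<and> card (\<beta> - \<alpha>) \<le> k \<and> code_interval \<alpha> \<beta> \<subseteq> C \<longrightarrow> (\<exists>x. TP N c' r' \<alpha> \<beta> x)"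
    using P4 by blast
  have P2': "\<forall>\<gamma>. \<gamma> \<subseteq> N \<longrightarrow> (\<gamma> \<in> C \<longleftrightarrow> atomN (\<lambda>j. ball (c' j) (r' j)) N \<gamma> \<noteq> {})"
    using P2 by blast
  have "Inv k C N c' r'" unfolding Inv_def using P1 P2' P3 P4' by (intro conjI)
  then show ?thesis by blast
qed

lemma main:
  "k_inductively_pierced k C \<Longrightarrow> DIM('a) = k + 1 \<Longrightarrow> finite N \<Longrightarrow> \<Union>C = N \<Longrightarrow>
    \<exists>(c :: nat \<Rightarrow> 'a::euclidean_space) r. Inv k C N c r"
proof (induction C arbitrary: N rule: k_inductively_pierced.induct)
  case base
  then have N: "N = {}" by auto
  define c :: "nat \<Rightarrow> 'a" where "c = (\<lambda>_. 0)"
  define r :: "nat \<Rightarrow> real" where "r = (\<lambda>_. 1)"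
  have P2: "\<forall>\<gamma>. \<gamma> \<subseteq> N \<longrightarrow> (\<gamma> \<in> {{}} \<longleftrightarrow> atomN (\<lambda>j. ball (c j) (r j)) N \<gamma> \<noteq> {})"
    unfolding N atomN_def by auto
  have P3: "WF N c r" unfolding WF_def N by auto
  have P4: "\<forall>\<alpha> \<beta>. \<alpha> \<subseteq> \<beta> \<and> card (\<beta> - \<alpha>) \<le> k \<and> code_interval \<alpha> \<beta> \<subseteq> {{}} \<longrightarrow> (\<exists>x. TP N c r \<alpha> \<beta> x)"
  proof (intro allI impI)
    fix \<alpha> \<beta> :: "nat set" assume H: "\<alpha> \<subseteq> \<beta> \<and> card (\<beta> - \<alpha>) \<le> k \<and> code_interval \<alpha> \<beta> \<subseteq> {{}}"
    then have "\<beta> \<in> code_interval \<alpha> \<beta>" unfolding code_interval_def by auto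
    then have "\<beta> = {}" using H by blast
    then have "\<alpha> = {}" using H by blast
    then show "\<exists>x. TP N c r \<alpha> \<beta> x" using \<open>\<beta> = {}\<close> unfolding TP_def N by (simp add: independent_empty)
  qed
  have "Inv k {{}} N c r" unfolding Inv_def using P2 P3 P4 N by (intro conjI) auto
  then show ?case by blast
next
  case (step C i k')
  obtain \<sigma> \<tau> where st: "\<sigma> \<subseteq> \<tau>" "finite \<tau>" "i \<notin> \<tau>" "card (\<tau> - \<sigma>) = k'"
    "code_interval \<sigma> \<tau> \<subseteq> code_del C i"
    "C = code_del C i \<union> code_interval (insert i \<sigma>) (insert i \<tau>)"
    using step.hyps(1) unfolding is_piercing_def by blast
  have U: "\<Union>(code_del C i) = N - {i}" using step.prems(3) unfolding code_del_def by auto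
  have fN: "finite (N - {i})" using step.prems(2) by simp
  obtain c :: "nat \<Rightarrow> 'a" and r where "Inv k (code_del C i) (N - {i}) c r"
    using step.IH[OF step.prems(1) fN U] by blast
  then show ?case
    using step_lemma[OF step.prems(1) step.prems(2) step.prems(3) st(1) st(3) st(4) step.hyps(2) st(5) st(6)]
    by blast
qed

theorem lemma3p4:
  fixes C :: "nat set set" and n k :: nat
  assumes "C \<subseteq> Pow {1..n}"
    and "{} \<in> C"
    and "\<forall>i\<in>{1..n}. \<exists>c\<in>C. i \<in> c"
    and "\<forall>i\<in>{1..n}. \<forall>j\<in>{1..n}. i \<noteq> j \<longrightarrow> {c\<in>C. i \<in> c} \<noteq> {c\<in>C. j \<in> c}"
    and "k_inductively_pierced k C"
    and "DIM('a::euclidean_space) = k + 1"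
  shows "\<exists>(c :: nat \<Rightarrow> 'a) (r :: nat \<Rightarrow> real).
           (\<forall>i\<in>{1..n}. 0 < r i) \<and>
           realizes (\<lambda>i. ball (c i) (r i)) n C \<and>
           well_formed_balls n c r \<and>
           (\<forall>\<alpha> \<beta>. \<alpha> \<subseteq> \<beta> \<and> card (\<beta> - \<alpha>) \<le> k \<and> code_interval \<alpha> \<beta> \<subseteq> C \<longrightarrow>
              (\<exists>p. pierceable_at (\<lambda>i. ball (c i) (r i)) n \<alpha> \<beta> p))"
proof -
  have UC: "\<Union>C = {1..n}"
  proof
    show "\<Union>C \<subseteq> {1..n}" using assms(1) by blast
    show "{1..n} \<subseteq> \<Union>C" using assms(3) by blast
  qed
  obtain c :: "nat \<Rightarrow> 'a" and r where I: "Inv k C {1..n} c r"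
    using main[OF assms(5) assms(6) _ UC] by blast
  have I1: "\<forall>j\<in>{1..n}. 0 < r j"
    and I2: "\<And>\<gamma>. \<gamma> \<subseteq> {1..n} \<Longrightarrow> (\<gamma> \<in> C \<longleftrightarrow> atomN (\<lambda>j. ball (c j) (r j)) {1..n} \<gamma> \<noteq> {})"
    and I3: "WF {1..n} c r"
    and I4: "\<And>\<alpha> \<beta>. \<alpha> \<subseteq> \<beta> \<Longrightarrow> card (\<beta> - \<alpha>) \<le> k \<Longrightarrow> code_interval \<alpha> \<beta> \<subseteq> C \<Longrightarrow> (\<exists>x. TP {1..n} c r \<alpha> \<beta> x)"
    using I unfolding Inv_def by auto
  have at: "atom U n \<gamma> = atomN U {1..n} \<gamma>" for U :: "nat \<Rightarrow> 'a set" and \<gamma>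
    unfolding atom_def atomN_def by simp
  have R: "realizes (\<lambda>i. ball (c i) (r i)) n C"
    unfolding realizes_def at
  proof (rule set_eqI)
    fix \<gamma>
    show "\<gamma> \<in> C \<longleftrightarrow> \<gamma> \<in> {\<gamma>. \<gamma> \<subseteq> {1..n} \<and> atomN (\<lambda>i. ball (c i) (r i)) {1..n} \<gamma> \<noteq> {}}"
      using I2[of \<gamma>] assms(1) by blast
  qed
  have W: "well_formed_balls n c r" using I3 unfolding WF_def well_formed_balls_def .
  have P: "\<exists>p. pierceable_at (\<lambda>i. ball (c i) (r i)) n \<alpha> \<beta> p"
    if H: "\<alpha> \<subseteq> \<beta>" "card (\<beta> - \<alpha>) \<le> k" "code_interval \<alpha> \<beta> \<subseteq> C" for \<alpha> \<beta>
  proof -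
    obtain x where x: "TP {1..n} c r \<alpha> \<beta> x" using I4[OF H] by blast
    have cd: "card (\<beta> - \<alpha>) < DIM('a)" using H(2) assms(6) by simp
    have "pierceable_at (\<lambda>i. ball (c i) (r i)) n \<alpha> \<beta> x"
      unfolding pierceable_at_def at code_interval_def
      using TP_limpt[OF _ x cd] by simp
    then show ?thesis by blast
  qed
  show ?thesis using I1 R W P by blast
qed

end
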